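(* Let $K\ge1$, $N\ge1$, $t\in\{0,1,\dots,K\}$, and for each file $i\in\{1,\dots,N\}$ and each subset $\mathcal{S}\subseteq\{1,\dots,K\}$ with $|\mathcal{S}|=t$ let $W_{i,\mathcal{S}}$ be a binary string, all of a common length. For a demand $\boldsymbol{d}=(d_1,\dots,d_K)\in\{1,\dots,N\}^K$ and a subset $\mathcal{A}\subseteq\{1,\dots,K\}$ with $|\mathcal{A}|=t+1$, define $Y_{\mathcal{A}}=\bigoplus_{x\in\mathcal{A}}W_{d_x,\mathcal{A}\setminus\{x\}}$ (bitwise XOR). Let $\mathcal{U}$ be a set of $N_{\mathrm{e}}(\boldsymbol{d})$ users requesting $N_{\mathrm{e}}(\boldsymbol{d})$ distinct files, where $N_{\mathrm{e}}(\boldsymbol{d})$ is the number of distinct entries of $\boldsymbol{d}$. Let $\mathcal{B}\subseteq\{1,\dots,K\}$ with $\mathcal{U}\subseteq\mathcal{B}$ and $|\mathcal{B}|=N_{\mathrm{e}}(\boldsymbol{d})+t+1$, and let $\mathcal{V}_{\mathrm{F}}$ be the family of all subsets $\mathcal{V}\subseteq\mathcal{B}$ such that each file requested in $\boldsymbol{d}$ is requested by exactly one user in $\mathcal{V}$. Then $$\bigoplus_{\mathcal{V}\in\mathcal{V}_{\mathrm{F}}}Y_{\mathcal{B}\setminus\mathcal{V}}=0.$$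
   Context: In the paper the strings $W_{i,\mathcal{S}}$ are the subfiles of the symmetric batch prefetching: file $i$ is split into $\binom{K}{t}$ equal-size parts indexed by the size-$t$ subsets $\mathcal{S}$ of users, and user $k$ caches all $W_{i,\mathcal{S}}$ with $k\in\mathcal{S}$. The users in $\mathcal{U}$ are called leaders. Note $|\mathcal{B}\setminus\mathcal{V}|=t+1$ for every $\mathcal{V}\in\mathcal{V}_{\mathrm{F}}$. *)

theory Defs
  imports Main "HOL-Library.Z2"
begin

text \<open>A binary string of length L is modelled as a function nat \<Rightarrow> bit
  whose positions j \<ge> L are 0; bitwise XOR is addition in the field bit (GF(2)).
  W i S is the subfile W_{i,S}.\<close>

definition Ne :: "nat \<Rightarrow> (nat \<Rightarrow> nat) \<Rightarrow> nat" where
  "Ne K d = card (d ` {1..K})"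

definition Ymsg :: "(nat \<Rightarrow> nat) \<Rightarrow> (nat \<Rightarrow> nat set \<Rightarrow> nat \<Rightarrow> bit) \<Rightarrow> nat set \<Rightarrow> nat \<Rightarrow> bit" where
  "Ymsg d W A j = (\<Sum>x\<in>A. W (d x) (A - {x}) j)"

definition VF :: "nat \<Rightarrow> (nat \<Rightarrow> nat) \<Rightarrow> nat set \<Rightarrow> nat set set" where
  "VF K d B = {V. V \<subseteq> B \<and> (\<forall>f \<in> d ` {1..K}. card {v \<in> V. d v = f} = 1)}"

end

theory Submission
  imports Defs "HOL-Library.Disjoint_Sets"
begin

lemma key:
  assumes V: "V \<in> VF K d B" and x: "x \<in> B" "x \<notin> V" and BK: "B \<subseteq> {1..K}"
  shows "\<exists>y. {v \<in> V. d v = d x} = {y} \<and> y \<in> V \<and> d y = d x \<and> y \<noteq> x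
           \<and> insert x (V - {y}) \<in> VF K d B"
proof -
  have VB: "V \<subseteq> B" and c: "\<And>f. f \<in> d ` {1..K} \<Longrightarrow> card {v \<in> V. d v = f} = 1"
    using V by (auto simp: VF_def)
  have "d x \<in> d ` {1..K}" using x BK by auto
  then have "card {v \<in> V. d v = d x} = 1" using c by blast
  then obtain y where y: "{v \<in> V. d v = d x} = {y}" by (metis card_1_singletonE)
  then have yV: "y \<in> V" "d y = d x" by auto
  have yx: "y \<noteq> x" using yV x by auto
  have "insert x (V - {y}) \<in> VF K d B"
    unfolding VF_def
  proof (intro CollectI conjI ballI)
    show "insert x (V - {y}) \<subseteq> B" using VB x by auto
    fix f assume f: "f \<in> d ` {1..K}"
    show "card {v \<in> insert x (V - {y}). d v = f} = 1"
    proof (cases "f = d x")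
      case True
      have "{v \<in> insert x (V - {y}). d v = f} = {x}" using y True by auto
      then show ?thesis by simp
    next
      case False
      have "{v \<in> insert x (V - {y}). d v = f} = {v \<in> V. d v = f}" using False yV by auto
      then show ?thesis using c f by simp
    qed
  qed
  then show ?thesis using y yV yx by blast
qed

theorem lemma1:
  fixes K N t L :: nat
    and W :: "nat \<Rightarrow> nat set \<Rightarrow> nat \<Rightarrow> bit"
    and d :: "nat \<Rightarrow> nat"
    and U B :: "nat set"
  assumes "K \<ge> 1" and "N \<ge> 1" and "t \<le> K"
    and len: "\<And>i S j. i \<in> {1..N} \<Longrightarrow> S \<subseteq> {1..K} \<Longrightarrow> card S = t \<Longrightarrow> j \<ge> L \<Longrightarrow> W i S j = 0"
    and dem: "\<And>k. k \<in> {1..K} \<Longrightarrow> d k \<in> {1..N}"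
    and U: "U \<subseteq> {1..K}" "card U = Ne K d" "inj_on d U"
    and B: "B \<subseteq> {1..K}" "U \<subseteq> B" "card B = Ne K d + t + 1"
  shows "\<forall>j. (\<Sum>V\<in>VF K d B. Ymsg d W (B - V) j) = 0"
proof
  fix j
  have finB: "finite B" using B(1) finite_subset by blast
  have finVF: "finite (VF K d B)"
    by (rule finite_subset[of _ "Pow B"]) (auto simp: VF_def finB)
  define X where "X = Sigma (VF K d B) (\<lambda>V. B - V)"
  define g where "g = (\<lambda>(V, x). W (d x) (B - V - {x}) j)"
  define h where "h = (\<lambda>(V::nat set, x::nat). let y = (THE v. v \<in> V \<and> d v = d x) in (insert x (V - {y}), y))"
  have "(\<Sum>V\<in>VF K d B. Ymsg d W (B - V) j) = (\<Sum>V\<in>VF K d B. \<Sum>x\<in>B - V. g (V, x))"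
    by (simp add: Ymsg_def g_def)
  also have "\<dots> = (\<Sum>p\<in>X. g p)"
    unfolding X_def using finVF finB by (subst sum.Sigma) auto
  also have "\<dots> = 0"
  proof (rule sum_involution_eq_0[where h = h])
    fix p assume p: "p \<in> X"
    obtain V x where px: "p = (V, x)" by (cases p)
    have V: "V \<in> VF K d B" and x: "x \<in> B" "x \<notin> V" using p px by (auto simp: X_def)
    obtain y where y: "{v \<in> V. d v = d x} = {y}" "y \<in> V" "d y = d x" "y \<noteq> x"
       "insert x (V - {y}) \<in> VF K d B"
      using key[OF V x B(1)] by blast
    have theY: "(THE v. v \<in> V \<and> d v = d x) = y"
      using y(1) by (intro the_equality) auto
    have hp: "h p = (insert x (V - {y}), y)" by (simp add: h_def px theY)
    have yB: "y \<in> B" using y(2) V by (auto simp: VF_def)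
    show "h p \<in> X" using hp y yB by (auto simp: X_def)
    show "h p \<noteq> p" using hp px y by auto
    have "{v \<in> insert x (V - {y}). d v = d y} = {x}" using y by auto
    then have theX: "(THE v. v \<in> insert x (V - {y}) \<and> d v = d y) = x"
      by (intro the_equality) auto
    show "h (h p) = p" using hp px theX y x by (auto simp: h_def insert_absorb)
    have "B - insert x (V - {y}) - {y} = B - V - {x}" using y by auto
    then have "g (h p) = g p" using hp px y by (simp add: g_def)
    then show "g (h p) + g p = 0" by simp
  qed
  finally show "(\<Sum>V\<in>VF K d B. Ymsg d W (B - V) j) = 0" .
qed

end
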